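(* Let $(g,n)$ be a hyperbolic pair and $d\in\mathbb Z$. The map $\mathfrak m\mapsto(\mathfrak m|_{\mathcal D(\Gamma)})_{\Gamma\in G_{g,n}}$ is a bijection from the set of degree $d$ universal stability conditions of type $(g,n)$ onto the set of families $(\mathfrak m^\Gamma)_{\Gamma\in G_{g,n}}$, where each $\mathfrak m^\Gamma$ is a degree $d$ c-stability condition on $\Gamma$, that agree on common domains (i.e. $\mathfrak m^\Gamma_{(e,h,A)}=\mathfrak m^{\Gamma'}_{(e,h,A)}$ whenever $(e,h,A)\in\mathcal D(\Gamma)\cap\mathcal D(\Gamma')$). The inverse sends such a family to $\mathfrak m$ with $\mathfrak m_{(e,h,A)}=\mathfrak m^\Gamma_{(e,h,A)}$ for any $\Gamma$ with $(e,h,A)\in\mathcal D(\Gamma)$.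
   Context: Fix integers $g,n\ge0$ with $2g-2+n>0$, $[n]=\{1,\dots,n\}$. A stable graph of type $(g,n)$ is a finite connected multigraph $\Gamma$ (loops allowed) with genus function $g:V(\Gamma)\to\mathbb Z_{\ge0}$ and markings $A(v)\subseteq[n]$ partitioning $[n]$, with $|E(\Gamma)|-|V(\Gamma)|+1+\sum_v g(v)=g$ and $2g(v)-2+\mathrm{val}(v)+|A(v)|>0$ for all $v$; $G_{g,n}$ is the set of representatives of isomorphism classes of such graphs. For $W\subseteq V(\Gamma)$: $\mathrm{val}(W)$ = number of edges between $W$ and its complement, $g(W)$ = genus of the induced subgraph $\Gamma[W]$ ($|E(\Gamma[W])|-|W|+1+\sum_{v\in W}g(v)$), $A(W)=\bigcup_{v\in W}A(v)$; $W$ is nontrivial biconnected if $\emptyset\ne W\ne V(\Gamma)$ and $W$ and its complement induce connected subgraphs; $\mathcal D(\Gamma)=\{(\mathrm{val}(W),g(W),A(W)): W \text{ nontrivial biconnected}\}$. The vine graph $V(e,h,A)$ has vertices $v_1,v_2$ joined by $e$ edges, no loops, $g(v_1)=h$, $A(v_1)=A$, $g(v_2)=g+1-e-h$, $A(v_2)=[n]\setminus A$; $\mathcal D_{g,n}$ is the set of $(e,h,A)$ ($e\ge1,h\ge0,g+1-e-h\ge0$, $A\subseteq[n]$) with $V(e,h,A)$ stable. A degree $d$ universal stability condition of type $(g,n)$ is a family of integers $(\mathfrak m_{(e,h,A)})_{(e,h,A)\in\mathcal D_{g,n}}$ with (i) $\mathfrak m_{(e,h,A)}+\mathfrak m_{(e,g+1-e-h,[n]\setminus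 A)}=d+1-e$ and (ii) $0\le \mathfrak m_{(e,h,A)}-h-(\mathfrak m_{(e',h',A')}-h')-(\mathfrak m_{(e'',h'',A'')}-h'')\le1$ whenever $A=A'\sqcup A''$, $2(h+1-h'-h'')=e'+e''-e$, and $e<e'+e''$, $e'<e+e''$, $e''<e+e'$. A degree $d$ c-stability condition on $\Gamma$ is a family of integers indexed by $\mathcal D(\Gamma)$ satisfying (i) and (ii) for all triples of elements of $\mathcal D(\Gamma)$. *)

theory Defs
  imports Main "HOL-Library.FuncSet"
begin

text \<open>A multigraph with loops: vertices, edge identifiers, the set of endpoints of
  each edge (one element for a loop, two for an ordinary edge), a genus function
  and markings.\<close>
record sgraph =
  verts  :: "nat set"
  edges  :: "nat set"
  endpts :: "nat \<Rightarrow> nat set"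
  gen    :: "nat \<Rightarrow> nat"
  mark   :: "nat \<Rightarrow> nat set"

type_synonym triple = "nat \<times> nat \<times> nat set"

definition vval :: "sgraph \<Rightarrow> nat \<Rightarrow> nat" where
  "vval G v = 2 * card {e \<in> edges G. endpts G e = {v}}
            + card {e \<in> edges G. v \<in> endpts G e \<and> card (endpts G e) = 2}"

definition adj_in :: "sgraph \<Rightarrow> nat set \<Rightarrow> nat \<Rightarrow> nat \<Rightarrow> bool" where
  "adj_in G W u v \<longleftrightarrow> u \<in> W \<and> v \<in> W \<and> (\<exists>e\<in>edges G. endpts G e = {u, v})"

definition connected_in :: "sgraph \<Rightarrow> nat set \<Rightarrow> bool" where
  "connected_in G W \<longleftrightarrow> W \<noteq> {} \<and> (\<forall>u\<in>W. \<forall>v\<in>W. (adj_in G W)\<^sup>*\<^sup>* u v)"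

definition inner_edges :: "sgraph \<Rightarrow> nat set \<Rightarrow> nat set" where
  "inner_edges G W = {e \<in> edges G. endpts G e \<subseteq> W}"

definition setval :: "sgraph \<Rightarrow> nat set \<Rightarrow> nat" where
  "setval G W = card {e \<in> edges G. endpts G e \<inter> W \<noteq> {} \<and> endpts G e - W \<noteq> {}}"

definition setgen :: "sgraph \<Rightarrow> nat set \<Rightarrow> int" where
  "setgen G W = int (card (inner_edges G W)) - int (card W) + 1 + (\<Sum>v\<in>W. int (gen G v))"

definition setmark :: "sgraph \<Rightarrow> nat set \<Rightarrow> nat set" where
  "setmark G W = (\<Union>v\<in>W. mark G v)"

definition stable_graph :: "nat \<Rightarrow> nat \<Rightarrow> sgraph \<Rightarrow> bool" where
  "stable_graph g n G \<longleftrightarrow>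
     finite (verts G) \<and> finite (edges G) \<and>
     (\<forall>e\<in>edges G. endpts G e \<subseteq> verts G \<and> 1 \<le> card (endpts G e) \<and> card (endpts G e) \<le> 2) \<and>
     (\<forall>v\<in>verts G. mark G v \<subseteq> {1..n}) \<and>
     (\<forall>v\<in>verts G. \<forall>w\<in>verts G. v \<noteq> w \<longrightarrow> mark G v \<inter> mark G w = {}) \<and>
     (\<Union>v\<in>verts G. mark G v) = {1..n} \<and>
     connected_in G (verts G) \<and>
     int (card (edges G)) - int (card (verts G)) + 1 + (\<Sum>v\<in>verts G. int (gen G v)) = int g \<and>
     (\<forall>v\<in>verts G. 2 * int (gen G v) - 2 + int (vval G v) + int (card (mark G v)) > 0)"

definition graph_iso :: "sgraph \<Rightarrow> sgraph \<Rightarrow> bool" where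
  "graph_iso G H \<longleftrightarrow> (\<exists>f \<phi>. bij_betw f (verts G) (verts H) \<and> bij_betw \<phi> (edges G) (edges H) \<and>
     (\<forall>e\<in>edges G. endpts H (\<phi> e) = f ` endpts G e) \<and>
     (\<forall>v\<in>verts G. gen H (f v) = gen G v \<and> mark H (f v) = mark G v))"

definition is_Ggn :: "nat \<Rightarrow> nat \<Rightarrow> sgraph set \<Rightarrow> bool" where
  "is_Ggn g n R \<longleftrightarrow> (\<forall>G\<in>R. stable_graph g n G) \<and>
     (\<forall>G. stable_graph g n G \<longrightarrow> (\<exists>H\<in>R. graph_iso G H)) \<and>
     (\<forall>G\<in>R. \<forall>H\<in>R. graph_iso G H \<longrightarrow> G = H)"

definition nontriv_biconn :: "sgraph \<Rightarrow> nat set \<Rightarrow> bool" where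
  "nontriv_biconn G W \<longleftrightarrow> W \<subseteq> verts G \<and> W \<noteq> {} \<and> W \<noteq> verts G \<and>
     connected_in G W \<and> connected_in G (verts G - W)"

text \<open>\<D>(\<Gamma>); the genus of a connected induced subgraph is nonnegative.\<close>
definition DG :: "sgraph \<Rightarrow> triple set" where
  "DG G = {(setval G W, nat (setgen G W), setmark G W) | W. nontriv_biconn G W}"

definition vine :: "nat \<Rightarrow> nat \<Rightarrow> nat \<Rightarrow> nat \<Rightarrow> nat set \<Rightarrow> sgraph" where
  "vine g n e h A = \<lparr> verts = {0, 1}, edges = {0..<e}, endpts = (\<lambda>_. {0, 1}),
      gen = (\<lambda>v. if v = 0 then h else g + 1 - e - h),
      mark = (\<lambda>v. if v = 0 then A else {1..n} - A) \<rparr>"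

definition Dgn :: "nat \<Rightarrow> nat \<Rightarrow> triple set" where
  "Dgn g n = {(e, h, A). e \<ge> 1 \<and> int g + 1 - int e - int h \<ge> 0 \<and> A \<subseteq> {1..n} \<and>
      stable_graph g n (vine g n e h A)}"

definition cond_i :: "nat \<Rightarrow> nat \<Rightarrow> int \<Rightarrow> triple set \<Rightarrow> (triple \<Rightarrow> int) \<Rightarrow> bool" where
  "cond_i g n d D m \<longleftrightarrow> (\<forall>(e, h, A)\<in>D.
      m (e, h, A) + m (e, g + 1 - e - h, {1..n} - A) = d + 1 - int e)"

definition cond_ii :: "triple set \<Rightarrow> (triple \<Rightarrow> int) \<Rightarrow> bool" where
  "cond_ii D m \<longleftrightarrow> (\<forall>(e, h, A)\<in>D. \<forall>(e', h', A')\<in>D. \<forall>(e'', h'', A'')\<in>D.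
      (A = A' \<union> A'' \<and> A' \<inter> A'' = {} \<and>
       2 * (int h + 1 - int h' - int h'') = int e' + int e'' - int e \<and>
       e < e' + e'' \<and> e' < e + e'' \<and> e'' < e + e') \<longrightarrow>
      0 \<le> m (e, h, A) - int h - (m (e', h', A') - int h') - (m (e'', h'', A'') - int h'') \<and>
      m (e, h, A) - int h - (m (e', h', A') - int h') - (m (e'', h'', A'') - int h'') \<le> 1)"

definition univ_stab :: "nat \<Rightarrow> nat \<Rightarrow> int \<Rightarrow> (triple \<Rightarrow> int) set" where
  "univ_stab g n d = {m \<in> Dgn g n \<rightarrow>\<^sub>E UNIV. cond_i g n d (Dgn g n) m \<and> cond_ii (Dgn g n) m}"

definition c_stab :: "nat \<Rightarrow> nat \<Rightarrow> int \<Rightarrow> sgraph \<Rightarrow> (triple \<Rightarrow> int) set" where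
  "c_stab g n d G = {m \<in> DG G \<rightarrow>\<^sub>E UNIV. cond_i g n d (DG G) m \<and> cond_ii (DG G) m}"

definition compat_families :: "nat \<Rightarrow> nat \<Rightarrow> int \<Rightarrow> sgraph set \<Rightarrow> (sgraph \<Rightarrow> triple \<Rightarrow> int) set" where
  "compat_families g n d R = {F \<in> (\<Pi>\<^sub>E G\<in>R. c_stab g n d G).
      \<forall>G\<in>R. \<forall>H\<in>R. \<forall>t \<in> DG G \<inter> DG H. F G t = F H t}"

definition restr_map :: "sgraph set \<Rightarrow> (triple \<Rightarrow> int) \<Rightarrow> sgraph \<Rightarrow> triple \<Rightarrow> int" where
  "restr_map R m = (\<lambda>G\<in>R. restrict m (DG G))"

end

theory Submission
  imports Defs
begin


definition cross :: "sgraph \<Rightarrow> nat set \<Rightarrow> nat \<Rightarrow> bool" where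
  "cross G W e \<longleftrightarrow> endpts G e \<inter> W \<noteq> {} \<and> endpts G e - W \<noteq> {}"

lemma card_filter_sum: "finite A \<Longrightarrow> card {x\<in>A. P x} = (\<Sum>x\<in>A. if P x then 1 else 0)"
  by (simp add: sum.inter_filter[symmetric])

lemma edge_cases:
  assumes "1 \<le> card X" "card X \<le> (2::nat)"
  obtains a where "X = {a}" | a b where "a \<noteq> b" "X = {a, b}"
proof -
  have "card X = 1 \<or> card X = 2" using assms by linarith
  thus ?thesis using that by (auto simp: card_1_singleton_iff card_2_iff)
qed

lemma per_edge:
  assumes "finite W" "1 \<le> card X" "card X \<le> (2::nat)"
  shows "(\<Sum>v\<in>W. 2 * (if X = {v} then 1 else 0) + (if v \<in> X \<and> card X = 2 then 1 else 0))
     = 2 * (if X \<subseteq> W then 1 else 0) + (if X \<inter> W \<noteq> {} \<and> X - W \<noteq> {} then (1::nat) else 0)"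
  using assms(2,3)
proof (cases rule: edge_cases)
  case (1 a)
  then show ?thesis using assms(1) by (simp add: sum.distrib if_distrib[of "\<lambda>x. 2*x"] eq_commute[of "{a}"] cong: if_cong)
next
  case (2 a b)
  have "(\<Sum>v\<in>W. (if v \<in> {a,b} then 1 else 0::nat)) = card (W \<inter> {a,b})"
    using assms(1) by (simp add: sum.inter_filter[symmetric] Int_def)
  also have "\<dots> = (if a \<in> W then 1 else 0) + (if b \<in> W then 1 else 0)"
    using 2 by (auto simp: Int_insert_right)
  finally have s: "(\<Sum>v\<in>W. (if v \<in> {a,b} then 1 else 0::nat)) = (if a \<in> W then 1 else 0) + (if b \<in> W then 1 else 0)" .
  have "\<And>v. X \<noteq> {v}" using 2 by (auto simp: doubleton_eq_iff)
  hence "(\<Sum>v\<in>W. 2 * (if X = {v} then 1 else 0) + (if v \<in> X \<and> card X = 2 then 1 else 0))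
     = (\<Sum>v\<in>W. (if v \<in> {a,b} then 1 else 0::nat))" using 2 by (intro sum.cong) auto
  then show ?thesis using 2 s by auto
qed

lemma vval_sum: "finite (edges G) \<Longrightarrow> vval G v = (\<Sum>e\<in>edges G. 2 * (if endpts G e = {v} then 1 else 0) + (if v \<in> endpts G e \<and> card (endpts G e) = 2 then 1 else 0))"
  unfolding vval_def by (simp add: card_filter_sum sum.distrib sum_distrib_left)

lemma deg_sum:
  assumes fE: "finite (edges G)" and ep: "\<forall>e\<in>edges G. 1 \<le> card (endpts G e) \<and> card (endpts G e) \<le> 2"
    and fW: "finite W"
  shows "(\<Sum>v\<in>W. vval G v) = 2 * card (inner_edges G W) + setval G W"
proof -
  have "(\<Sum>v\<in>W. vval G v) = (\<Sum>e\<in>edges G. \<Sum>v\<in>W. 2 * (if endpts G e = {v} then 1 else 0) + (if v \<in> endpts G e \<and> card (endpts G e) = 2 then 1 else 0))"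
    using fE by (simp add: vval_sum sum.swap[of _ W])
  also have "\<dots> = (\<Sum>e\<in>edges G. 2 * (if endpts G e \<subseteq> W then 1 else 0) + (if endpts G e \<inter> W \<noteq> {} \<and> endpts G e - W \<noteq> {} then (1::nat) else 0))"
    using ep fW by (intro sum.cong refl per_edge) auto
  also have "\<dots> = 2 * card (inner_edges G W) + setval G W"
    using fE unfolding inner_edges_def setval_def by (simp add: card_filter_sum sum.distrib sum_distrib_left)
  finally show ?thesis .
qed



lemma conn_edges:
  assumes fin: "finite (edges G)" and fW: "finite W" and c: "connected_in G W"
  shows "card W \<le> card (inner_edges G W) + 1"
proof -
  let ?a = "adj_in G W"
  from c obtain r where r: "r \<in> W" unfolding connected_in_def by auto
  define dist where "dist v = (LEAST k. (?a ^^ k) r v)" for v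
  have ex: "\<exists>k. (?a ^^ k) r v" if "v \<in> W" for v
    using c r that unfolding connected_in_def by (simp add: rtranclp_power)
  have dmin: "dist v \<le> k" if "(?a ^^ k) r v" for v k
    unfolding dist_def using that by (rule Least_le)
  have dreach: "(?a ^^ dist v) r v" if "v \<in> W" for v
    unfolding dist_def using ex[OF that] by (rule LeastI_ex)
  have par: "\<exists>e u. e \<in> edges G \<and> endpts G e = {u, v} \<and> u \<in> W \<and> dist u < dist v"
    if v: "v \<in> W - {r}" for v
  proof (cases "dist v")
    case 0
    with dreach[of v] v show ?thesis by (auto elim: relpowp_0_E)
  next
    case (Suc j)
    with dreach[of v] v obtain u where u1: "(?a ^^ j) r u" and u2: "?a u v"
      by (auto elim: relpowp_Suc_E)
    from dmin[OF u1] Suc have "dist u < dist v" by simp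
    with u2 show ?thesis unfolding adj_in_def by blast
  qed
  define ed where "ed v = (SOME e. \<exists>u. e \<in> edges G \<and> endpts G e = {u, v} \<and> u \<in> W \<and> dist u < dist v)" for v
  have edp: "\<exists>u. ed v \<in> edges G \<and> endpts G (ed v) = {u, v} \<and> u \<in> W \<and> dist u < dist v"
    if "v \<in> W - {r}" for v
    unfolding ed_def using par[OF that] by (rule someI_ex[where P="\<lambda>e. \<exists>u. _ e u"]) 
  have inj: "inj_on ed (W - {r})"
  proof (rule inj_onI)
    fix v w assume v: "v \<in> W - {r}" and w: "w \<in> W - {r}" and eq: "ed v = ed w"
    obtain u where u: "endpts G (ed v) = {u, v}" "dist u < dist v" using edp[OF v] by blast
    obtain u' where u': "endpts G (ed w) = {u', w}" "dist u' < dist w" using edp[OF w] by blast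
    show "v = w"
    proof (rule ccontr)
      assume "v \<noteq> w"
      with u u' eq have "v = u'" "w = u" by (auto simp: doubleton_eq_iff)
      with u u' show False by simp
    qed
  qed
  have sub: "ed ` (W - {r}) \<subseteq> inner_edges G W"
    using edp unfolding inner_edges_def by fastforce
  have "finite (inner_edges G W)" using fin unfolding inner_edges_def by simp
  hence "card (W - {r}) \<le> card (inner_edges G W)"
    using card_inj_on_le[OF inj sub] by simp
  thus ?thesis using r fW by simp
qed


lemma stable_basic:
  assumes "stable_graph g n G"
  shows "finite (verts G)" "finite (edges G)"
    "\<And>e. e \<in> edges G \<Longrightarrow> endpts G e \<subseteq> verts G \<and> 1 \<le> card (endpts G e) \<and> card (endpts G e) \<le> 2"
    "\<And>v. v \<in> verts G \<Longrightarrow> mark G v \<subseteq> {1..n}"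
    "\<And>v w. v \<in> verts G \<Longrightarrow> w \<in> verts G \<Longrightarrow> v \<noteq> w \<Longrightarrow> mark G v \<inter> mark G w = {}"
    "(\<Union>v\<in>verts G. mark G v) = {1..n}"
    "connected_in G (verts G)"
    "int (card (edges G)) - int (card (verts G)) + 1 + (\<Sum>v\<in>verts G. int (gen G v)) = int g"
    "\<And>v. v \<in> verts G \<Longrightarrow> 2 * int (gen G v) - 2 + int (vval G v) + int (card (mark G v)) > 0"
  using assms unfolding stable_graph_def by simp_all

lemma ep_nonempty: "1 \<le> card X \<Longrightarrow> X \<noteq> {}" by auto

lemma edge_partition:
  assumes st: "stable_graph g n G" and W: "W \<subseteq> verts G"
  shows "card (edges G) = card (inner_edges G W) + card (inner_edges G (verts G - W)) + setval G W"
    "setval G (verts G - W) = setval G W"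
proof -
  note sb = stable_basic[OF st]
  let ?I = "inner_edges G W" and ?J = "inner_edges G (verts G - W)"
    and ?C = "{e \<in> edges G. endpts G e \<inter> W \<noteq> {} \<and> endpts G e - W \<noteq> {}}"
  have ne: "\<And>e. e \<in> edges G \<Longrightarrow> endpts G e \<noteq> {} \<and> endpts G e \<subseteq> verts G"
    using sb(3) by fastforce
  have E: "edges G = ?I \<union> ?J \<union> ?C" using ne unfolding inner_edges_def by blast
  have d1: "?I \<inter> ?J = {}" using ne W unfolding inner_edges_def by blast
  have d2: "(?I \<union> ?J) \<inter> ?C = {}" unfolding inner_edges_def by blast
  have f: "finite ?I" "finite ?J" "finite ?C" using sb(2) unfolding inner_edges_def by auto
  have c1: "card (edges G) = card (?I \<union> ?J \<union> ?C)" by (rule arg_cong[OF E])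
  have c2: "card (?I \<union> ?J \<union> ?C) = card ?I + card ?J + card ?C"
    using f d1 d2 by (simp add: card_Un_disjoint)
  show "card (edges G) = card ?I + card ?J + setval G W"
    unfolding setval_def using c1 c2 by linarith
  have "{e \<in> edges G. endpts G e \<inter> (verts G - W) \<noteq> {} \<and> endpts G e - (verts G - W) \<noteq> {}} = ?C"
    using ne W by blast
  thus "setval G (verts G - W) = setval G W" unfolding setval_def by simp
qed

lemma genus_compl:
  assumes st: "stable_graph g n G" and W: "W \<subseteq> verts G"
  shows "setgen G W + setgen G (verts G - W) = int g + 1 - int (setval G W)"
proof -
  note sb = stable_basic[OF st]
  have fW: "finite W" using finite_subset[OF W sb(1)] .
  have cV: "card (verts G) = card W + card (verts G - W)"
    using fW W sb(1) by (simp add: card_Diff_subset card_mono)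
  have sV: "(\<Sum>v\<in>verts G. int (gen G v)) = (\<Sum>v\<in>W. int (gen G v)) + (\<Sum>v\<in>verts G - W. int (gen G v))"
    using sb(1) W by (metis add.commute sum.subset_diff)
  show ?thesis using edge_partition(1)[OF st W] sb(8) cV sV unfolding setgen_def by simp
qed

lemma cross_exists:
  assumes "(adj_in G V)\<^sup>*\<^sup>* u v" "u \<in> W" "v \<notin> W"
  shows "\<exists>e\<in>edges G. endpts G e \<inter> W \<noteq> {} \<and> endpts G e - W \<noteq> {}"
  using assms
proof (induction rule: rtranclp_induct)
  case base thus ?case by simp
next
  case (step y z)
  show ?case
  proof (cases "y \<in> W")
    case True
    with step show ?thesis unfolding adj_in_def by blast
  next
    case False with step show ?thesis by blast
  qed
qed

lemma mark_compl:
  assumes st: "stable_graph g n G" and W: "W \<subseteq> verts G"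
  shows "setmark G (verts G - W) = {1..n} - setmark G W" "setmark G W \<subseteq> {1..n}"
proof -
  note sb = stable_basic[OF st]
  show "setmark G W \<subseteq> {1..n}" using sb(4) W unfolding setmark_def by blast
  show "setmark G (verts G - W) = {1..n} - setmark G W"
  proof
    show "setmark G (verts G - W) \<subseteq> {1..n} - setmark G W"
    proof
      fix x assume "x \<in> setmark G (verts G - W)"
      then obtain v where v: "v \<in> verts G" "v \<notin> W" "x \<in> mark G v" unfolding setmark_def by blast
      have "x \<in> {1..n}" using sb(4)[OF v(1)] v(3) by blast
      moreover have "x \<notin> mark G w" if "w \<in> W" for w
        using sb(5)[OF v(1), of w] that W v by blast
      ultimately show "x \<in> {1..n} - setmark G W" unfolding setmark_def by blast
    qed
    show "{1..n} - setmark G W \<subseteq> setmark G (verts G - W)"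
    proof
      fix x assume x: "x \<in> {1..n} - setmark G W"
      then obtain v where "v \<in> verts G" "x \<in> mark G v" using sb(6) by blast
      thus "x \<in> setmark G (verts G - W)" using x unfolding setmark_def by blast
    qed
  qed
qed





lemma genus_nonneg:
  assumes st: "stable_graph g n G" and W: "W \<subseteq> verts G" and c: "connected_in G W"
  shows "setgen G W \<ge> 0"
proof -
  note sb = stable_basic[OF st]
  have fW: "finite W" using finite_subset[OF W sb(1)] .
  have "card W \<le> card (inner_edges G W) + 1" using conn_edges[OF sb(2) fW c] .
  moreover have "(\<Sum>v\<in>W. int (gen G v)) \<ge> 0" by (simp add: sum_nonneg)
  ultimately show ?thesis unfolding setgen_def by linarith
qed

lemma stab_sum:
  assumes st: "stable_graph g n G" and W: "W \<subseteq> verts G" and ne: "W \<noteq> {}"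
  shows "2 * setgen G W - 2 + int (setval G W) + int (card (setmark G W)) > 0"
proof -
  note sb = stable_basic[OF st]
  have fW: "finite W" using finite_subset[OF W sb(1)] .
  have "(\<Sum>v\<in>W. (1::int)) \<le> (\<Sum>v\<in>W. 2 * int (gen G v) - 2 + int (vval G v) + int (card (mark G v)))"
    using sb(9) W by (intro sum_mono) force
  moreover have "(\<Sum>v\<in>W. (1::int)) > 0" using fW ne by (simp add: card_gt_0_iff)
  moreover have "(\<Sum>v\<in>W. 2 * int (gen G v) - 2 + int (vval G v) + int (card (mark G v)))
     = 2 * (\<Sum>v\<in>W. int (gen G v)) - 2 * int (card W) + int (\<Sum>v\<in>W. vval G v) + int (\<Sum>v\<in>W. card (mark G v))"
    by (simp add: sum.distrib sum_subtractf sum_distrib_left)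
  moreover have "(\<Sum>v\<in>W. vval G v) = 2 * card (inner_edges G W) + setval G W"
    using deg_sum[OF sb(2) _ fW] sb(3) by blast
  moreover have "(\<Sum>v\<in>W. card (mark G v)) = card (setmark G W)"
    unfolding setmark_def
  proof (rule card_UN_disjoint[symmetric, OF fW])
    show "\<forall>i\<in>W. finite (mark G i)" using sb(4) W by (meson finite_atLeastAtMost finite_subset subsetD)
    show "\<forall>i\<in>W. \<forall>j\<in>W. i \<noteq> j \<longrightarrow> mark G i \<inter> mark G j = {}" using sb(5) W by blast
  qed
  ultimately show ?thesis unfolding setgen_def by simp
qed

lemma DG_facts:
  assumes st: "stable_graph g n G" and W: "nontriv_biconn G W"
  shows "setval G W \<ge> 1" "setgen G W \<ge> 0" "setgen G (verts G - W) = int g + 1 - int (setval G W) - setgen G W"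
    "setgen G (verts G - W) \<ge> 0"
    "setval G (verts G - W) = setval G W" "setmark G (verts G - W) = {1..n} - setmark G W"
    "setmark G W \<subseteq> {1..n}"
    "2 * setgen G W - 2 + int (setval G W) + int (card (setmark G W)) > 0"
    "2 * setgen G (verts G - W) - 2 + int (setval G W) + int (card ({1..n} - setmark G W)) > 0"
proof -
  note sb = stable_basic[OF st]
  have Ws: "W \<subseteq> verts G" "W \<noteq> {}" "W \<noteq> verts G" "connected_in G W" "connected_in G (verts G - W)"
    using W unfolding nontriv_biconn_def by auto
  obtain u where u: "u \<in> W" using Ws by auto
  obtain v where v: "v \<in> verts G" "v \<notin> W" using Ws by auto
  have "(adj_in G (verts G))\<^sup>*\<^sup>* u v" using sb(7) u v Ws(1) unfolding connected_in_def by blast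
  from cross_exists[OF this u v(2)] obtain e where
    "e \<in> {e \<in> edges G. endpts G e \<inter> W \<noteq> {} \<and> endpts G e - W \<noteq> {}}" by blast
  moreover have "finite {e \<in> edges G. endpts G e \<inter> W \<noteq> {} \<and> endpts G e - W \<noteq> {}}" using sb(2) by simp
  ultimately have "card {e \<in> edges G. endpts G e \<inter> W \<noteq> {} \<and> endpts G e - W \<noteq> {}} > 0"
    using card_gt_0_iff by blast
  thus "setval G W \<ge> 1" unfolding setval_def by simp
  show "setgen G W \<ge> 0" using genus_nonneg[OF st Ws(1,4)] .
  show "setgen G (verts G - W) = int g + 1 - int (setval G W) - setgen G W"
    using genus_compl[OF st Ws(1)] by linarith
  show "setgen G (verts G - W) \<ge> 0" using genus_nonneg[OF st _ Ws(5)] by simp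
  show ev: "setval G (verts G - W) = setval G W" using edge_partition(2)[OF st Ws(1)] .
  show em: "setmark G (verts G - W) = {1..n} - setmark G W" using mark_compl(1)[OF st Ws(1)] .
  show "setmark G W \<subseteq> {1..n}" using mark_compl(2)[OF st Ws(1)] .
  show "2 * setgen G W - 2 + int (setval G W) + int (card (setmark G W)) > 0"
    using stab_sum[OF st Ws(1,2)] .
  have "verts G - W \<noteq> {}" using Ws by auto
  from stab_sum[OF st _ this]
  show "2 * setgen G (verts G - W) - 2 + int (setval G W) + int (card ({1..n} - setmark G W)) > 0"
    unfolding ev em by simp
qed




lemma conn_single: "connected_in G {x}"
  unfolding connected_in_def by auto

lemma adj_sym: "adj_in G W u v \<Longrightarrow> adj_in G W v u"
  unfolding adj_in_def by (auto simp: insert_commute)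

lemma vine_simps:
  "verts (vine g n e h A) = {0,1}" "edges (vine g n e h A) = {0..<e}"
  "endpts (vine g n e h A) i = {0,1}"
  "gen (vine g n e h A) v = (if v = 0 then h else g + 1 - e - h)"
  "mark (vine g n e h A) v = (if v = 0 then A else {1..n} - A)"
  unfolding vine_def by simp_all

lemma vval_vine: "v \<in> {0,1} \<Longrightarrow> vval (vine g n e h A) v = e"
  unfolding vval_def vine_simps by auto

lemma vine_conn:
  assumes "e \<ge> 1" shows "connected_in (vine g n e h A) {0,1}"
proof -
  have a: "adj_in (vine g n e h A) {0,1} 0 1" unfolding adj_in_def vine_simps using assms by (auto intro!: exI[of _ 0])
  have b: "adj_in (vine g n e h A) {0,1} 1 0" using adj_sym[OF a] .
  show ?thesis unfolding connected_in_def using a b by auto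
qed

lemma stable_vine_iff:
  assumes e: "e \<ge> 1" and gh: "int g + 1 - int e - int h \<ge> 0" and A: "A \<subseteq> {1..n}"
  shows "stable_graph g n (vine g n e h A) \<longleftrightarrow>
    (2 * int h - 2 + int e + int (card A) > 0 \<and>
     2 * (int g + 1 - int e - int h) - 2 + int e + int (card ({1..n} - A)) > 0)"
proof -
  have gn: "int (g + 1 - e - h) = int g + 1 - int e - int h" using gh by linarith
  have c2: "card {0::nat,1} = 2" by simp
  have s: "(\<Sum>v\<in>{0::nat,1}. int (gen (vine g n e h A) v)) = int h + int (g + 1 - e - h)"
    by (simp add: vine_simps)
  show ?thesis
    unfolding stable_graph_def
    using vine_conn[OF e, of g n h A] A gn Un_absorb2[OF A]
    by (simp add: vine_simps vval_vine s c2 Diff_Int_distrib2 Un_absorb1 Int_absorb2) 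
qed

lemma Dgn_iff: "(e, h, A) \<in> Dgn g n \<longleftrightarrow> e \<ge> 1 \<and> int g + 1 - int e - int h \<ge> 0 \<and> A \<subseteq> {1..n} \<and>
    2 * int h - 2 + int e + int (card A) > 0 \<and>
     2 * (int g + 1 - int e - int h) - 2 + int e + int (card ({1..n} - A)) > 0"
  unfolding Dgn_def using stable_vine_iff by auto

lemma vine_DG:
  assumes "(e, h, A) \<in> Dgn g n"
  shows "(e, h, A) \<in> DG (vine g n e h A)"
proof -
  let ?G = "vine g n e h A"
  have e: "e \<ge> 1" using assms Dgn_iff by blast
  have nt: "nontriv_biconn ?G {0}"
    unfolding nontriv_biconn_def vine_simps using conn_single[of ?G 0] conn_single[of ?G 1]
    by (simp add: insert_Diff_if)
  have v: "setval ?G {0} = e" unfolding setval_def vine_simps by simp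
  have gg: "setgen ?G {0} = int h" unfolding setgen_def inner_edges_def vine_simps by simp
  have m: "setmark ?G {0} = A" unfolding setmark_def vine_simps by simp
  show ?thesis unfolding DG_def using nt v gg m by (metis (mono_tags, lifting) mem_Collect_eq nat_int)
qed




lemma DG_sub:
  assumes st: "stable_graph g n G"
  shows "DG G \<subseteq> Dgn g n"
proof
  fix t assume "t \<in> DG G"
  then obtain W where W: "nontriv_biconn G W" and t: "t = (setval G W, nat (setgen G W), setmark G W)"
    unfolding DG_def by blast
  note f = DG_facts[OF st W]
  have h: "int (nat (setgen G W)) = setgen G W" using f(2) by simp
  show "t \<in> Dgn g n" unfolding t Dgn_iff h using f by simp
qed

lemma DG_compl:
  assumes st: "stable_graph g n G" and t: "(e, h, A) \<in> DG G"
  shows "(e, g + 1 - e - h, {1..n} - A) \<in> DG G"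
proof -
  from t obtain W where W: "nontriv_biconn G W" and t: "e = setval G W" "h = nat (setgen G W)" "A = setmark G W"
    unfolding DG_def by blast
  note f = DG_facts[OF st W]
  have W': "nontriv_biconn G (verts G - W)"
    using W unfolding nontriv_biconn_def by (auto simp: double_diff)
  have "nat (setgen G (verts G - W)) = g + 1 - e - h" using f(2,3,4) t by simp
  hence "(e, g + 1 - e - h, {1..n} - A) = (setval G (verts G - W), nat (setgen G (verts G - W)), setmark G (verts G - W))"
    using f(5,6) t by simp
  thus ?thesis unfolding DG_def using W' by blast
qed




lemma rtranclp_map:
  assumes "R\<^sup>*\<^sup>* u v" "\<And>x y. R x y \<Longrightarrow> S (f x) (f y)"
  shows "S\<^sup>*\<^sup>* (f u) (f v)"
  using assms(1)
proof (induction rule: rtranclp_induct)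
  case base thus ?case by simp
next
  case (step y z) thus ?case using assms(2) by (meson rtranclp.rtrancl_into_rtrancl)
qed

lemma iso_DG:
  assumes st: "stable_graph g n G" and iso: "graph_iso G H"
  shows "DG G \<subseteq> DG H"
proof -
  note sb = stable_basic[OF st]
  obtain f \<phi> where AA: "bij_betw f (verts G) (verts H) \<and> bij_betw \<phi> (edges G) (edges H) \<and>
     (\<forall>e\<in>edges G. endpts H (\<phi> e) = f ` endpts G e) \<and>
     (\<forall>v\<in>verts G. gen H (f v) = gen G v \<and> mark H (f v) = mark G v)"
    using iso unfolding graph_iso_def by (elim exE) (rule that)
  have bf: "bij_betw f (verts G) (verts H)" and b\<phi>: "bij_betw \<phi> (edges G) (edges H)"
    using AA by simp_all
  have ep: "\<And>e. e \<in> edges G \<Longrightarrow> endpts H (\<phi> e) = f ` endpts G e" using AA by simp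
  have gm: "\<And>v. v \<in> verts G \<Longrightarrow> gen H (f v) = gen G v \<and> mark H (f v) = mark G v" using AA by simp
  have injf: "inj_on f (verts G)" and imf: "f ` verts G = verts H" using bf unfolding bij_betw_def by simp_all
  have inj\<phi>: "inj_on \<phi> (edges G)" and im\<phi>: "\<phi> ` edges G = edges H" using b\<phi> unfolding bij_betw_def by simp_all
  have epV: "\<And>e. e \<in> edges G \<Longrightarrow> endpts G e \<subseteq> verts G" using sb(3) by simp
  have cardQ: "card {e' \<in> edges H. Q (endpts H e')} = card {e \<in> edges G. Q (f ` endpts G e)}" for Q
  proof -
    have "{e' \<in> edges H. Q (endpts H e')} = \<phi> ` {e \<in> edges G. Q (f ` endpts G e)}"
    proof (rule set_eqI, rule iffI)
      fix x assume "x \<in> {e' \<in> edges H. Q (endpts H e')}"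
      hence x: "x \<in> edges H" "Q (endpts H x)" by auto
      then obtain e where e: "e \<in> edges G" "x = \<phi> e" using im\<phi> by blast
      show "x \<in> \<phi> ` {e \<in> edges G. Q (f ` endpts G e)}" using e x ep[OF e(1)] by auto
    next
      fix x assume "x \<in> \<phi> ` {e \<in> edges G. Q (f ` endpts G e)}"
      then obtain e where e: "e \<in> edges G" "Q (f ` endpts G e)" "x = \<phi> e" by blast
      have "\<phi> e \<in> edges H" using e(1) im\<phi> by blast
      thus "x \<in> {e' \<in> edges H. Q (endpts H e')}" using e ep[OF e(1)] by simp
    qed
    moreover have "inj_on \<phi> {e \<in> edges G. Q (f ` endpts G e)}" using inj\<phi> by (rule inj_on_subset) auto
    ultimately show ?thesis by (simp add: card_image)
  qed
  have imgI: "f ` X \<inter> f ` Y = f ` (X \<inter> Y)" "f ` X - f ` Y = f ` (X - Y)"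
    "f ` X \<subseteq> f ` Y \<longleftrightarrow> X \<subseteq> Y"
    if XY: "X \<subseteq> verts G" "Y \<subseteq> verts G" for X Y
  proof -
    show "f ` X \<inter> f ` Y = f ` (X \<inter> Y)" using inj_on_image_Int[OF injf XY] by simp
    show "f ` X - f ` Y = f ` (X - Y)" using inj_on_image_set_diff[OF injf _ XY(2)] XY(1) by blast
    show "f ` X \<subseteq> f ` Y \<longleftrightarrow> X \<subseteq> Y"
    proof
      assume a: "f ` X \<subseteq> f ` Y"
      show "X \<subseteq> Y"
      proof
        fix x assume x: "x \<in> X"
        then obtain y where y: "y \<in> Y" "f x = f y" using a by blast
        have "x = y" using inj_onD[OF injf y(2)] x y(1) XY by blast
        thus "x \<in> Y" using y by simp
      qed
    qed (rule image_mono)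
  qed
  have adjm: "adj_in H (f ` X) (f x) (f y)" if "adj_in G X x y" for X x y
    using that ep unfolding adj_in_def using im\<phi> by fastforce
  have connm: "connected_in H (f ` X)" if "connected_in G X" for X
    unfolding connected_in_def
  proof (intro conjI ballI)
    show "f ` X \<noteq> {}" using that unfolding connected_in_def by simp
    fix a b assume "a \<in> f ` X" "b \<in> f ` X"
    then obtain x y where "x \<in> X" "y \<in> X" "a = f x" "b = f y" by blast
    then show "(adj_in H (f ` X))\<^sup>*\<^sup>* a b"
      using that adjm unfolding connected_in_def by (metis rtranclp_map)
  qed
  show ?thesis
  proof
    fix t assume "t \<in> DG G"
    then obtain W where W: "nontriv_biconn G W" and t: "t = (setval G W, nat (setgen G W), setmark G W)"
      unfolding DG_def by blast
    have Ws: "W \<subseteq> verts G" "W \<noteq> {}" "W \<noteq> verts G" "connected_in G W" "connected_in G (verts G - W)"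
      using W unfolding nontriv_biconn_def by auto
    have comp: "verts H - f ` W = f ` (verts G - W)" using imgI(2)[OF order_refl Ws(1)] imf by simp
    have "f ` W \<noteq> verts H"
    proof
      assume "f ` W = verts H"
      hence "f ` W = f ` verts G" using imf by simp
      hence "W = verts G" using imgI(3)[OF Ws(1) order_refl] imgI(3)[OF order_refl Ws(1)] by blast
      thus False using Ws(3) by simp
    qed
    hence nt: "nontriv_biconn H (f ` W)"
      unfolding nontriv_biconn_def comp using Ws imf connm by blast
    have "setval H (f ` W) = card {e \<in> edges G. (\<lambda>Y. Y \<inter> f ` W \<noteq> {} \<and> Y - f ` W \<noteq> {}) (f ` endpts G e)}"
      unfolding setval_def by (rule cardQ)
    also have "\<dots> = setval G W" unfolding setval_def
    proof (rule arg_cong[where f=card], rule Collect_cong)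
      fix e
      show "(e \<in> edges G \<and> (\<lambda>Y. Y \<inter> f ` W \<noteq> {} \<and> Y - f ` W \<noteq> {}) (f ` endpts G e)) =
        (e \<in> edges G \<and> endpts G e \<inter> W \<noteq> {} \<and> endpts G e - W \<noteq> {})"
      proof (cases "e \<in> edges G")
        case True
        hence X: "endpts G e \<subseteq> verts G" by (rule epV)
        show ?thesis unfolding imgI(1)[OF X Ws(1)] imgI(2)[OF X Ws(1)] by simp
      qed simp
    qed
    finally have v: "setval H (f ` W) = setval G W" .
    have "card (inner_edges H (f ` W)) = card {e \<in> edges G. (\<lambda>Y. Y \<subseteq> f ` W) (f ` endpts G e)}"
      unfolding inner_edges_def by (rule cardQ)
    also have "\<dots> = card (inner_edges G W)" unfolding inner_edges_def
    proof (rule arg_cong[where f=card], rule Collect_cong)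
      fix e
      show "(e \<in> edges G \<and> (\<lambda>Y. Y \<subseteq> f ` W) (f ` endpts G e)) = (e \<in> edges G \<and> endpts G e \<subseteq> W)"
      proof (cases "e \<in> edges G")
        case True
        hence X: "endpts G e \<subseteq> verts G" by (rule epV)
        show ?thesis using imgI(3)[OF X Ws(1)] by simp
      qed simp
    qed
    finally have ie: "card (inner_edges H (f ` W)) = card (inner_edges G W)" .
    have injW: "inj_on f W" using injf Ws(1) by (rule inj_on_subset)
    have cW: "card (f ` W) = card W" using injW by (rule card_image)
    have sg: "(\<Sum>v\<in>f ` W. int (gen H v)) = (\<Sum>v\<in>W. int (gen G v))"
    proof -
      have "(\<Sum>x\<in>W. int (gen H (f x))) = (\<Sum>v\<in>W. int (gen G v))"
        using gm Ws(1) by (intro sum.cong) auto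
      thus ?thesis using sum.reindex[OF injW, of "\<lambda>v. int (gen H v)"] by simp
    qed
    have gg: "setgen H (f ` W) = setgen G W" unfolding setgen_def ie cW sg ..
    have mm: "setmark H (f ` W) = setmark G W" unfolding setmark_def using gm Ws(1) by auto
    show "t \<in> DG H" unfolding DG_def t using nt v gg mm by (metis (mono_tags, lifting) mem_Collect_eq)
  qed
qed




lemma adj_rtr_sym: "(adj_in G W)\<^sup>*\<^sup>* x y \<Longrightarrow> (adj_in G W)\<^sup>*\<^sup>* y x"
proof (induction rule: rtranclp_induct)
  case base thus ?case by simp
next
  case (step y z) thus ?case using adj_sym[OF step(2)] by (meson converse_rtranclp_into_rtranclp)
qed

lemma conn_root:
  assumes "r \<in> W" "\<And>v. v \<in> W \<Longrightarrow> (adj_in G W)\<^sup>*\<^sup>* r v"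
  shows "connected_in G W"
  unfolding connected_in_def using assms adj_rtr_sym by (meson empty_iff rtranclp_trans)

definition tri :: "nat \<Rightarrow> nat \<Rightarrow> nat \<Rightarrow> nat \<Rightarrow> nat \<Rightarrow> nat \<Rightarrow> nat \<Rightarrow> nat set \<Rightarrow> nat set \<Rightarrow> nat set \<Rightarrow> sgraph" where
  "tri n a b c h1 h2 h0 A1 A2 A = \<lparr> verts = {0,1,2}, edges = {0..<a+b+c},
     endpts = (\<lambda>i. if i < a then {0,1} else if i < a + b then {0,2} else {1,2}),
     gen = (\<lambda>v. if v = 0 then h1 else if v = 1 then h2 else h0),
     mark = (\<lambda>v. if v = 0 then A1 else if v = 1 then A2 else {1..n} - A) \<rparr>"

context
  fixes n a b c h1 h2 h0 :: nat and A1 A2 A :: "nat set"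
  assumes abc: "a \<ge> 1" "b \<ge> 1" "c \<ge> 1"
begin

abbreviation "T \<equiv> tri n a b c h1 h2 h0 A1 A2 A"

lemma T_simps: "verts T = {0,1,2}" "edges T = {0..<a+b+c}"
  "endpts T i = (if i < a then {0,1} else if i < a + b then {0,2} else {1,2})"
  "gen T v = (if v = 0 then h1 else if v = 1 then h2 else h0)"
  "mark T v = (if v = 0 then A1 else if v = 1 then A2 else {1..n} - A)"
  unfolding tri_def by simp_all

lemma T_adj01: "{0,1} \<subseteq> W \<Longrightarrow> adj_in T W 0 1"
  unfolding adj_in_def T_simps using abc by (auto intro!: bexI[of _ 0])
lemma T_adj02: "{0,2} \<subseteq> W \<Longrightarrow> adj_in T W 0 2"
  unfolding adj_in_def T_simps using abc by (auto intro!: bexI[of _ a])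
lemma T_adj12: "{1,2} \<subseteq> W \<Longrightarrow> adj_in T W 1 2"
  unfolding adj_in_def T_simps using abc by (auto intro!: bexI[of _ "a+b"])

lemma T_conn: "connected_in T {0,1,2}" "connected_in T {0,1}" "connected_in T {0,2}" "connected_in T {1,2}"
proof -
  show "connected_in T {0,1,2}"
    by (rule conn_root[of 0]) (use T_adj01[of "{0,1,2}"] T_adj02[of "{0,1,2}"] in auto)
  show "connected_in T {0,1}"
    by (rule conn_root[of 0]) (use T_adj01[of "{0,1}"] in auto)
  show "connected_in T {0,2}"
    by (rule conn_root[of 0]) (use T_adj02[of "{0,2}"] in auto)
  show "connected_in T {1,2}"
    by (rule conn_root[of 1]) (use T_adj12[of "{1,2}"] in auto)
qed

lemma T_vval: "vval T 0 = a + b" "vval T 1 = a + c" "vval T 2 = b + c"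
proof -
  have L: "{i \<in> edges T. endpts T i = {v}} = {}" for v
    unfolding T_simps by (auto simp: doubleton_eq_iff)
  have C: "card (endpts T i) = 2" for i unfolding T_simps by simp
  have "{i \<in> edges T. 0 \<in> endpts T i \<and> card (endpts T i) = 2} = {0..<a+b}" unfolding T_simps by auto
  thus "vval T 0 = a + b" unfolding vval_def L by simp
  have "{i \<in> edges T. 1 \<in> endpts T i \<and> card (endpts T i) = 2} = {0..<a} \<union> {a+b..<a+b+c}" unfolding T_simps by auto
  thus "vval T 1 = a + c" unfolding vval_def L by (simp add: card_Un_disjoint)
  have "{i \<in> edges T. 2 \<in> endpts T i \<and> card (endpts T i) = 2} = {a..<a+b+c}" unfolding T_simps by auto
  thus "vval T 2 = b + c" unfolding vval_def L by simp
qed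

lemma T_sv: "setval T {0} = a + b" "setval T {1} = a + c" "setval T {0,1} = b + c"
proof -
  have "{i \<in> edges T. endpts T i \<inter> {0} \<noteq> {} \<and> endpts T i - {0} \<noteq> {}} = {0..<a+b}" unfolding T_simps by auto
  thus "setval T {0} = a + b" unfolding setval_def by simp
  have "{i \<in> edges T. endpts T i \<inter> {1} \<noteq> {} \<and> endpts T i - {1} \<noteq> {}} = {0..<a} \<union> {a+b..<a+b+c}" unfolding T_simps by auto
  thus "setval T {1} = a + c" unfolding setval_def by (simp add: card_Un_disjoint)
  have "{i \<in> edges T. endpts T i \<inter> {0,1} \<noteq> {} \<and> endpts T i - {0,1} \<noteq> {}} = {a..<a+b+c}" unfolding T_simps by auto
  thus "setval T {0,1} = b + c" unfolding setval_def by simp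
qed

lemma T_sg: "setgen T {0} = int h1" "setgen T {1} = int h2" "setgen T {0,1} = int a - 1 + int h1 + int h2"
proof -
  have "inner_edges T {0} = {}" unfolding inner_edges_def T_simps by auto
  thus "setgen T {0} = int h1" unfolding setgen_def T_simps by simp
  have "inner_edges T {1} = {}" unfolding inner_edges_def T_simps by auto
  thus "setgen T {1} = int h2" unfolding setgen_def T_simps by simp
  have "inner_edges T {0,1} = {0..<a}" unfolding inner_edges_def T_simps using abc by auto
  thus "setgen T {0,1} = int a - 1 + int h1 + int h2" unfolding setgen_def T_simps by simp
qed

lemma T_nt: "nontriv_biconn T {0}" "nontriv_biconn T {1}" "nontriv_biconn T {0,1}"
proof -
  have "{0::nat,1,2} - {0} = {1,2}" "{0::nat,1,2} - {1} = {0,2}" "{0::nat,1,2} - {0,1} = {2}" by auto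
  thus "nontriv_biconn T {0}" "nontriv_biconn T {1}" "nontriv_biconn T {0,1}"
    unfolding nontriv_biconn_def T_simps(1) using T_conn conn_single by auto
qed

end




lemma tri_exists:
  assumes t: "(e, h, A) \<in> Dgn g n" and t1: "(e1, h1, A1) \<in> Dgn g n" and t2: "(e2, h2, A2) \<in> Dgn g n"
    and AU: "A = A1 \<union> A2" and AI: "A1 \<inter> A2 = {}"
    and hh: "2 * (int h + 1 - int h1 - int h2) = int e1 + int e2 - int e"
    and i1: "e < e1 + e2" and i2: "e1 < e + e2" and i3: "e2 < e + e1"
  shows "\<exists>G. stable_graph g n G \<and> (e, h, A) \<in> DG G \<and> (e1, h1, A1) \<in> DG G \<and> (e2, h2, A2) \<in> DG G"
proof -
  define a where "a = nat (int h + 1 - int h1 - int h2)"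
  define b where "b = e1 - a"
  define c where "c = e2 - a"
  define h0 where "h0 = g + 1 - e - h"
  have a2: "2 * int a = int e1 + int e2 - int e" using hh i1 unfolding a_def by simp
  have ai: "int a = int h + 1 - int h1 - int h2" using a2 i1 unfolding a_def by linarith
  have abc: "a \<ge> 1" "b \<ge> 1" "c \<ge> 1" using a2 i1 i2 i3 unfolding b_def c_def by linarith+
  have bi: "int b = int e1 - int a" "int c = int e2 - int a" using a2 i2 i3 unfolding b_def c_def by linarith+
  have D: "e \<ge> 1 \<and> int g + 1 - int e - int h \<ge> 0 \<and> A \<subseteq> {1..n} \<and>
    2 * int h - 2 + int e + int (card A) > 0 \<and>
     2 * (int g + 1 - int e - int h) - 2 + int e + int (card ({1..n} - A)) > 0" using t Dgn_iff by blast
  have D1: "A1 \<subseteq> {1..n} \<and> 2 * int h1 - 2 + int e1 + int (card A1) > 0" using t1 Dgn_iff by blast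
  have D2: "A2 \<subseteq> {1..n} \<and> 2 * int h2 - 2 + int e2 + int (card A2) > 0" using t2 Dgn_iff by blast
  have h0i: "int h0 = int g + 1 - int e - int h" using D unfolding h0_def by linarith
  let ?G = "tri n a b c h1 h2 h0 A1 A2 A"
  note S = T_simps[OF abc, of n h1 h2 h0 A1 A2 A]
  note VV = T_vval[OF abc, of n h1 h2 h0 A1 A2 A]
  have sum3: "(\<Sum>v\<in>{0::nat,1,2}. int (gen ?G v)) = int h1 + int h2 + int h0" by (simp add: S)
  have st: "stable_graph g n ?G"
    unfolding stable_graph_def
  proof (intro conjI)
    show "finite (verts ?G)" "finite (edges ?G)" unfolding S by simp_all
    show "\<forall>e\<in>edges ?G. endpts ?G e \<subseteq> verts ?G \<and> 1 \<le> card (endpts ?G e) \<and> card (endpts ?G e) \<le> 2"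
      unfolding S by simp
    show "\<forall>v\<in>verts ?G. mark ?G v \<subseteq> {1..n}" unfolding S using D1 D2 by auto
    show "\<forall>v\<in>verts ?G. \<forall>w\<in>verts ?G. v \<noteq> w \<longrightarrow> mark ?G v \<inter> mark ?G w = {}"
      unfolding S using AU AI by auto
    show "(\<Union>v\<in>verts ?G. mark ?G v) = {1..n}" unfolding S using AU D1 D2 by auto
    show "connected_in ?G (verts ?G)" unfolding S(1) using T_conn(1)[OF abc] .
    show "int (card (edges ?G)) - int (card (verts ?G)) + 1 + (\<Sum>v\<in>verts ?G. int (gen ?G v)) = int g"
    proof -
      have "int (card (edges ?G)) = int a + int b + int c" "int (card (verts ?G)) = 3" by (simp_all add: S)
      thus ?thesis unfolding S(1) sum3 using bi a2 h0i ai by linarith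
    qed
    show "\<forall>v\<in>verts ?G. 2 * int (gen ?G v) - 2 + int (vval ?G v) + int (card (mark ?G v)) > 0"
      unfolding S(1) using VV D D1 D2 bi h0i a2 by (auto simp: S)
  qed
  have "(e1, h1, A1) \<in> DG ?G"
  proof -
    have "(e1, h1, A1) = (setval ?G {0}, nat (setgen ?G {0}), setmark ?G {0})"
      using T_sv[OF abc] T_sg[OF abc] bi unfolding setmark_def S by simp
    thus ?thesis unfolding DG_def using T_nt[OF abc, of n h1 h2 h0 A1 A2 A] by blast
  qed
  moreover have "(e2, h2, A2) \<in> DG ?G"
  proof -
    have "(e2, h2, A2) = (setval ?G {1}, nat (setgen ?G {1}), setmark ?G {1})"
      using T_sv[OF abc] T_sg[OF abc] bi unfolding setmark_def S by simp
    thus ?thesis unfolding DG_def using T_nt[OF abc, of n h1 h2 h0 A1 A2 A] by blast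
  qed
  moreover have "(e, h, A) \<in> DG ?G"
  proof -
    have sm: "setmark ?G {0,1} = A" unfolding setmark_def S using AU by (simp add: Un_commute)
    have "(e, h, A) = (setval ?G {0,1}, nat (setgen ?G {0,1}), setmark ?G {0,1})"
      using T_sv[OF abc] T_sg[OF abc] bi a2 sm ai by simp
    thus ?thesis unfolding DG_def using T_nt[OF abc, of n h1 h2 h0 A1 A2 A] by blast
  qed
  ultimately show ?thesis using st by blast
qed




lemma cond_i_iff: "cond_i g n d D m \<longleftrightarrow> (\<forall>e h A. (e, h, A) \<in> D \<longrightarrow>
      m (e, h, A) + m (e, g + 1 - e - h, {1..n} - A) = d + 1 - int e)"
  unfolding cond_i_def by auto

definition tcond :: "triple \<Rightarrow> triple \<Rightarrow> triple \<Rightarrow> bool" where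
  "tcond t t' t'' \<longleftrightarrow> (case t of (e, h, A) \<Rightarrow> case t' of (e', h', A') \<Rightarrow> case t'' of (e'', h'', A'') \<Rightarrow>
     A = A' \<union> A'' \<and> A' \<inter> A'' = {} \<and>
       2 * (int h + 1 - int h' - int h'') = int e' + int e'' - int e \<and>
       e < e' + e'' \<and> e' < e + e'' \<and> e'' < e + e')"

definition tconc :: "(triple \<Rightarrow> int) \<Rightarrow> triple \<Rightarrow> triple \<Rightarrow> triple \<Rightarrow> bool" where
  "tconc m t t' t'' \<longleftrightarrow> (case t of (e, h, A) \<Rightarrow> case t' of (e', h', A') \<Rightarrow> case t'' of (e'', h'', A'') \<Rightarrow>
      0 \<le> m (e, h, A) - int h - (m (e', h', A') - int h') - (m (e'', h'', A'') - int h'') \<and>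
      m (e, h, A) - int h - (m (e', h', A') - int h') - (m (e'', h'', A'') - int h'') \<le> 1)"

lemma cond_ii_iff: "cond_ii D m \<longleftrightarrow> (\<forall>t\<in>D. \<forall>t'\<in>D. \<forall>t''\<in>D. tcond t t' t'' \<longrightarrow> tconc m t t' t'')"
proof
  assume C: "cond_ii D m"
  show "\<forall>t\<in>D. \<forall>t'\<in>D. \<forall>t''\<in>D. tcond t t' t'' \<longrightarrow> tconc m t t' t''"
  proof (intro ballI impI)
    fix t t' t'' assume tt: "t \<in> D" "t' \<in> D" "t'' \<in> D" and tc: "tcond t t' t''"
    obtain e h A where t: "t = (e, h, A)" by (cases t) auto
    obtain e' h' A' where t': "t' = (e', h', A')" by (cases t') auto
    obtain e'' h'' A'' where t'': "t'' = (e'', h'', A'')" by (cases t'') auto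
    from C tt have "\<forall>(e, h, A)\<in>D. \<forall>(e', h', A')\<in>D. \<forall>(e'', h'', A'')\<in>D.
      (A = A' \<union> A'' \<and> A' \<inter> A'' = {} \<and>
       2 * (int h + 1 - int h' - int h'') = int e' + int e'' - int e \<and>
       e < e' + e'' \<and> e' < e + e'' \<and> e'' < e + e') \<longrightarrow>
      0 \<le> m (e, h, A) - int h - (m (e', h', A') - int h') - (m (e'', h'', A'') - int h'') \<and>
      m (e, h, A) - int h - (m (e', h', A') - int h') - (m (e'', h'', A'') - int h'') \<le> 1"
      unfolding cond_ii_def by blast
    from bspec[OF this tt(1)[unfolded t]] have "\<forall>(e', h', A')\<in>D. \<forall>(e'', h'', A'')\<in>D.
      (A = A' \<union> A'' \<and> A' \<inter> A'' = {} \<and>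
       2 * (int h + 1 - int h' - int h'') = int e' + int e'' - int e \<and>
       e < e' + e'' \<and> e' < e + e'' \<and> e'' < e + e') \<longrightarrow>
      0 \<le> m (e, h, A) - int h - (m (e', h', A') - int h') - (m (e'', h'', A'') - int h'') \<and>
      m (e, h, A) - int h - (m (e', h', A') - int h') - (m (e'', h'', A'') - int h'') \<le> 1"
      by simp
    from bspec[OF this tt(2)[unfolded t']] have "\<forall>(e'', h'', A'')\<in>D.
      (A = A' \<union> A'' \<and> A' \<inter> A'' = {} \<and>
       2 * (int h + 1 - int h' - int h'') = int e' + int e'' - int e \<and>
       e < e' + e'' \<and> e' < e + e'' \<and> e'' < e + e') \<longrightarrow>
      0 \<le> m (e, h, A) - int h - (m (e', h', A') - int h') - (m (e'', h'', A'') - int h'') \<and>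
      m (e, h, A) - int h - (m (e', h', A') - int h') - (m (e'', h'', A'') - int h'') \<le> 1"
      by simp
    from bspec[OF this tt(3)[unfolded t'']] have "(A = A' \<union> A'' \<and> A' \<inter> A'' = {} \<and>
       2 * (int h + 1 - int h' - int h'') = int e' + int e'' - int e \<and>
       e < e' + e'' \<and> e' < e + e'' \<and> e'' < e + e') \<longrightarrow>
      0 \<le> m (e, h, A) - int h - (m (e', h', A') - int h') - (m (e'', h'', A'') - int h'') \<and>
      m (e, h, A) - int h - (m (e', h', A') - int h') - (m (e'', h'', A'') - int h'') \<le> 1"
      by simp
    thus "tconc m t t' t''" using tc unfolding t t' t'' tcond_def tconc_def by simp
  qed
next
  assume C: "\<forall>t\<in>D. \<forall>t'\<in>D. \<forall>t''\<in>D. tcond t t' t'' \<longrightarrow> tconc m t t' t''"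
  show "cond_ii D m" unfolding cond_ii_def Ball_def split_paired_All split_conv
  proof (intro allI impI)
    fix e h A e' h' A' e'' h'' A''
    assume tt: "(e, h, A) \<in> D" "(e', h', A') \<in> D" "(e'', h'', A'') \<in> D"
    assume H: "A = A' \<union> A'' \<and> A' \<inter> A'' = {} \<and> 2 * (int h + 1 - int h' - int h'') = int e' + int e'' - int e \<and>
      e < e' + e'' \<and> e' < e + e'' \<and> e'' < e + e'"
    hence "tcond (e, h, A) (e', h', A') (e'', h'', A'')" unfolding tcond_def by simp
    with C tt have "tconc m (e, h, A) (e', h', A') (e'', h'', A'')" by blast
    thus "0 \<le> m (e, h, A) - int h - (m (e', h', A') - int h') - (m (e'', h'', A'') - int h'') \<and>
      m (e, h, A) - int h - (m (e', h', A') - int h') - (m (e'', h'', A'') - int h'') \<le> 1"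
      unfolding tconc_def by simp
  qed
qed

lemma tconc_cong: "m t = m' t \<Longrightarrow> m t' = m' t' \<Longrightarrow> m t'' = m' t'' \<Longrightarrow> tconc m t t' t'' = tconc m' t t' t''"
  unfolding tconc_def by (simp add: split_def)


lemma compat_D:
  assumes "F \<in> compat_families g n d R"
  shows "F \<in> (\<Pi>\<^sub>E G\<in>R. c_stab g n d G)"
    "\<And>G H t. G \<in> R \<Longrightarrow> H \<in> R \<Longrightarrow> t \<in> DG G \<Longrightarrow> t \<in> DG H \<Longrightarrow> F G t = F H t"
proof -
  have C: "F \<in> (\<Pi>\<^sub>E G\<in>R. c_stab g n d G) \<and> (\<forall>G\<in>R. \<forall>H\<in>R. \<forall>t \<in> DG G \<inter> DG H. F G t = F H t)"
    using assms unfolding compat_families_def by (rule CollectD)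
  thus "F \<in> (\<Pi>\<^sub>E G\<in>R. c_stab g n d G)" by (rule conjunct1)
  fix G H t assume a: "G \<in> R" "H \<in> R" "t \<in> DG G" "t \<in> DG H"
  hence "t \<in> DG G \<inter> DG H" by simp
  thus "F G t = F H t" using conjunct2[OF C] a(1,2) by blast
qed

lemma compat_cstab: "F \<in> compat_families g n d R \<Longrightarrow> G \<in> R \<Longrightarrow> F G \<in> c_stab g n d G"
  by (rule PiE_mem[OF compat_D(1)])

lemma c_stab_D: "m \<in> c_stab g n d G \<Longrightarrow> m \<in> DG G \<rightarrow>\<^sub>E UNIV \<and> cond_i g n d (DG G) m \<and> cond_ii (DG G) m"
  unfolding c_stab_def by simp

lemma univ_D: "m \<in> univ_stab g n d \<Longrightarrow> m \<in> Dgn g n \<rightarrow>\<^sub>E UNIV \<and> cond_i g n d (Dgn g n) m \<and> cond_ii (Dgn g n) m"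
  unfolding univ_stab_def by simp




theorem mainTheorem11:
  fixes g n :: nat and d :: int and R :: "sgraph set"
  assumes hyp: "2 * int g - 2 + int n > 0"
    and R: "is_Ggn g n R"
  shows "bij_betw (restr_map R) (univ_stab g n d) (compat_families g n d R) \<and>
         (\<forall>F\<in>compat_families g n d R. \<forall>G\<in>R. \<forall>t\<in>DG G.
            the_inv_into (univ_stab g n d) (restr_map R) F t = F G t)"
proof -
  have R1: "\<And>G. G \<in> R \<Longrightarrow> stable_graph g n G" using R unfolding is_Ggn_def by blast
  have R2: "\<And>G. stable_graph g n G \<Longrightarrow> \<exists>H\<in>R. graph_iso G H" using R unfolding is_Ggn_def by blast
  have sub: "\<And>G. G \<in> R \<Longrightarrow> DG G \<subseteq> Dgn g n" using R1 DG_sub by blast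
  have cov: "\<exists>G\<in>R. t \<in> DG G" if t: "t \<in> Dgn g n" for t
  proof -
    obtain e h A where tt: "t = (e, h, A)" by (cases t) auto
    have st: "stable_graph g n (vine g n e h A)" using t unfolding tt Dgn_def by simp
    have "t \<in> DG (vine g n e h A)" using vine_DG t unfolding tt by simp
    moreover obtain H where "H \<in> R" "graph_iso (vine g n e h A) H" using R2[OF st] by blast
    ultimately show ?thesis using iso_DG[OF st] by blast
  qed
  have tri: "\<exists>G\<in>R. t \<in> DG G \<and> t' \<in> DG G \<and> t'' \<in> DG G"
    if tD: "t \<in> Dgn g n" "t' \<in> Dgn g n" "t'' \<in> Dgn g n" and tc: "tcond t t' t''" for t t' t''
  proof -
    obtain e h A where t: "t = (e, h, A)" by (cases t) auto
    obtain e' h' A' where t': "t' = (e', h', A')" by (cases t') auto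
    obtain e'' h'' A'' where t'': "t'' = (e'', h'', A'')" by (cases t'') auto
    have c: "A = A' \<union> A''" "A' \<inter> A'' = {}" "2 * (int h + 1 - int h' - int h'') = int e' + int e'' - int e"
      "e < e' + e''" "e' < e + e''" "e'' < e + e'" using tc unfolding t t' t'' tcond_def by simp_all
    obtain G where G: "stable_graph g n G" "t \<in> DG G" "t' \<in> DG G" "t'' \<in> DG G"
      using tri_exists[OF tD[unfolded t t' t''] c] unfolding t t' t'' by blast
    obtain H where "H \<in> R" "graph_iso G H" using R2[OF G(1)] by blast
    thus ?thesis using iso_DG[OF G(1)] G by blast
  qed
  define glue where "glue F t = (if t \<in> Dgn g n then F (SOME G. G \<in> R \<and> t \<in> DG G) t else undefined)"
    for F :: "sgraph \<Rightarrow> triple \<Rightarrow> int" and t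
  have glue_eq: "glue F t = F G t" if F: "F \<in> compat_families g n d R" and G: "G \<in> R" "t \<in> DG G" for F G t
  proof -
    have tD: "t \<in> Dgn g n" using sub G by blast
    let ?H = "SOME G. G \<in> R \<and> t \<in> DG G"
    have "G \<in> R \<and> t \<in> DG G" using G by simp
    hence H: "?H \<in> R \<and> t \<in> DG ?H" by (rule someI)
    have "F ?H t = F G t" using compat_D(2)[OF F, of ?H G t] H G by blast
    thus ?thesis unfolding glue_def using tD by simp
  qed
  have cstab: "F G \<in> c_stab g n d G" if "F \<in> compat_families g n d R" "G \<in> R" for F G
    using compat_cstab[OF that] .
  have maps: "restr_map R m \<in> compat_families g n d R" if m: "m \<in> univ_stab g n d" for m
  proof -
    have mi: "cond_i g n d (Dgn g n) m" and mii: "cond_ii (Dgn g n) m" using univ_D[OF m] by auto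
    have cs: "restrict m (DG G) \<in> c_stab g n d G" if G: "G \<in> R" for G
    proof -
      have ci: "cond_i g n d (DG G) (restrict m (DG G))"
        unfolding cond_i_iff
      proof (intro allI impI)
        fix e h A assume t: "(e, h, A) \<in> DG G"
        have tc: "(e, g + 1 - e - h, {1..n} - A) \<in> DG G" using DG_compl[OF R1[OF G] t] .
        have "(e, h, A) \<in> Dgn g n" using sub[OF G] t by blast
        thus "restrict m (DG G) (e, h, A) + restrict m (DG G) (e, g + 1 - e - h, {1..n} - A) = d + 1 - int e"
          using mi t tc unfolding cond_i_iff by simp
      qed
      have cii: "cond_ii (DG G) (restrict m (DG G))"
        unfolding cond_ii_iff
      proof (intro ballI impI)
        fix t t' t'' assume tt: "t \<in> DG G" "t' \<in> DG G" "t'' \<in> DG G" and tc: "tcond t t' t''"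
        have "tconc m t t' t''" using mii tt tc sub[OF G] unfolding cond_ii_iff by blast
        thus "tconc (restrict m (DG G)) t t' t''" using tconc_cong[of "restrict m (DG G)" t m t' t''] tt by simp
      qed
      show ?thesis unfolding c_stab_def using ci cii by simp
    qed
    have pe: "restr_map R m \<in> (\<Pi>\<^sub>E G\<in>R. c_stab g n d G)"
      unfolding restr_map_def restrict_PiE by (intro Pi_I cs)
    have cp: "\<forall>G\<in>R. \<forall>H\<in>R. \<forall>t \<in> DG G \<inter> DG H. restr_map R m G t = restr_map R m H t"
      unfolding restr_map_def by simp
    show ?thesis unfolding compat_families_def mem_Collect_eq using pe cp by (rule conjI)
  qed
  have inj: "inj_on (restr_map R) (univ_stab g n d)"
  proof (rule inj_onI)
    fix m1 m2 assume m1: "m1 \<in> univ_stab g n d" and m2: "m2 \<in> univ_stab g n d"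
      and eq: "restr_map R m1 = restr_map R m2"
    have e1: "m1 \<in> Dgn g n \<rightarrow>\<^sub>E UNIV" and e2: "m2 \<in> Dgn g n \<rightarrow>\<^sub>E UNIV" using univ_D[OF m1] univ_D[OF m2] by auto
    show "m1 = m2"
    proof (rule PiE_ext[OF e1 e2])
      fix t assume t: "t \<in> Dgn g n"
      obtain G where G: "G \<in> R" "t \<in> DG G" using cov[OF t] by blast
      have "restr_map R m1 G t = restr_map R m2 G t" using eq by simp
      thus "m1 t = m2 t" using G unfolding restr_map_def by simp
    qed
  qed
  have surj: "glue F \<in> univ_stab g n d \<and> restr_map R (glue F) = F" if F: "F \<in> compat_families g n d R" for F
  proof -
    have extg: "glue F \<in> Dgn g n \<rightarrow>\<^sub>E UNIV" unfolding glue_def by auto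
    have ci: "cond_i g n d (Dgn g n) (glue F)" unfolding cond_i_iff
    proof (intro allI impI)
      fix e h A assume t: "(e, h, A) \<in> Dgn g n"
      obtain G where G: "G \<in> R" "(e, h, A) \<in> DG G" using cov[OF t] by blast
      have tc: "(e, g + 1 - e - h, {1..n} - A) \<in> DG G" using DG_compl[OF R1[OF G(1)] G(2)] .
      have "cond_i g n d (DG G) (F G)" using c_stab_D[OF cstab[OF F G(1)]] by blast
      thus "glue F (e, h, A) + glue F (e, g + 1 - e - h, {1..n} - A) = d + 1 - int e"
        using glue_eq[OF F G] glue_eq[OF F G(1) tc] G(2) unfolding cond_i_iff by simp
    qed
    have cii: "cond_ii (Dgn g n) (glue F)" unfolding cond_ii_iff
    proof (intro ballI impI)
      fix t t' t'' assume tt: "t \<in> Dgn g n" "t' \<in> Dgn g n" "t'' \<in> Dgn g n" and tc: "tcond t t' t''"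
      obtain G where G: "G \<in> R" "t \<in> DG G" "t' \<in> DG G" "t'' \<in> DG G" using tri[OF tt tc] by blast
      have "cond_ii (DG G) (F G)" using c_stab_D[OF cstab[OF F G(1)]] by blast
      hence "tconc (F G) t t' t''" using G tc unfolding cond_ii_iff by blast
      thus "tconc (glue F) t t' t''"
        using tconc_cong[of "glue F" t "F G" t' t''] glue_eq[OF F G(1)] G(2-4) by simp
    qed
    have r: "restr_map R (glue F) = F"
    proof (rule ext)
      fix G
      show "restr_map R (glue F) G = F G"
      proof (cases "G \<in> R")
        case GR: True
        have FG: "F G \<in> DG G \<rightarrow>\<^sub>E UNIV" using c_stab_D[OF cstab[OF F GR]] by blast
        have rG: "restr_map R (glue F) G = restrict (glue F) (DG G)" unfolding restr_map_def using GR by simp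
        show ?thesis unfolding rG
        proof (rule ext)
          fix t
          show "restrict (glue F) (DG G) t = F G t"
          proof (cases "t \<in> DG G")
            case tG: True
            have "restrict (glue F) (DG G) t = glue F t" using tG by simp
            also have "\<dots> = F G t" using glue_eq[OF F GR tG] .
            finally show ?thesis .
          next
            case tG: False
            have "F G t = undefined" using PiE_arb[OF FG tG] .
            thus ?thesis using tG by simp
          qed
        qed
      next
        case GR: False
        have FP: "F \<in> (\<Pi>\<^sub>E G\<in>R. c_stab g n d G)" using compat_D(1)[OF F] .
        have "F G = undefined" using PiE_arb[OF FP GR] .
        moreover have "restr_map R (glue F) G = undefined" unfolding restr_map_def using GR by simp
        ultimately show ?thesis by simp
      qed
    qed
    have "glue F \<in> univ_stab g n d" unfolding univ_stab_def mem_Collect_eq using extg ci cii by blast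
    thus ?thesis using r by simp
  qed
  have bij: "bij_betw (restr_map R) (univ_stab g n d) (compat_families g n d R)"
    unfolding bij_betw_def
  proof (intro conjI inj)
    show "restr_map R ` univ_stab g n d = compat_families g n d R"
    proof
      show "restr_map R ` univ_stab g n d \<subseteq> compat_families g n d R" using maps by blast
      show "compat_families g n d R \<subseteq> restr_map R ` univ_stab g n d"
      proof
        fix F assume F: "F \<in> compat_families g n d R"
        thus "F \<in> restr_map R ` univ_stab g n d" using surj[OF F] by (metis image_eqI)
      qed
    qed
  qed
  have inv: "the_inv_into (univ_stab g n d) (restr_map R) F t = F G t"
    if F: "F \<in> compat_families g n d R" and G: "G \<in> R" "t \<in> DG G" for F G t
  proof -
    have "the_inv_into (univ_stab g n d) (restr_map R) F = glue F"
      using the_inv_into_f_eq[OF inj] surj[OF F] by blast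
    thus ?thesis using glue_eq[OF F G] by simp
  qed
  show ?thesis using bij inv by blast
qed


end
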